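(* For every context $\Gamma$, terms $M,N,A,B$ and variable $x$: if $\Gamma,x:A\vdash M:B$ and $\Gamma\vdash N:A$, then $\Gamma\vdash M[x:=N]:B[x:=N]$.
   Context: Let $\mathcal V$ (the variables) be a type with decidable equality, equipped with functions $\mathrm{encode}:\mathcal V\to\mathbb N$ and $\mathrm{decode}:\mathbb N\to\mathcal V$ such that $\mathrm{encode}(\mathrm{decode}\,n)=n$ for all $n$. Let $\mathcal C$ (the constants) be any type. Terms $\Lambda$ are generated by: $c\,k$ ($k\in\mathcal C$), $v\,x$ ($x\in\mathcal V$), $\lambda[x:A]M$, $\Pi[x:A]B$ and $M\cdot N$; in $\lambda[x:A]M$ and $\Pi[x:A]B$ the name $x$ binds in $M$ (resp. $B$) but not in $A$. Terms are raw first-order syntax (not identified up to renaming of bound variables) and $\equiv$ denotes syntactic identity. The list of free variables is $\mathrm{fv}(c\,k)=[\,]$, $\mathrm{fv}(v\,x)=[x]$, $\mathrm{fv}(\lambda[x:A]M)=\mathrm{fv}\,A\mathbin{+\!\!+}(\mathrm{fv}\,M-x)$, $\mathrm{fv}(\Pi[x:A]B)=\mathrm{fv}\,A\mathbin{+\!\!+}(\mathrm{fv}\,B-x)$, $\mathrm{fv}(M\cdot N)=\mathrm{fv}\,M\mathbin{+\!\!+}\mathrm{fv}\,N$, where $\mathbin{+\!\!+}$ is list concatenation and $xs-x$ deletes every occurrence of $x$ from $xs$. Fix a function $\chi':\mathrm{List}\,\mathbb N\to\mathbb N$ with $\chi'(ns)\notin ns$ for every list $ns$, and put $X'(xs)=\mathrm{decode}(\chi'(\mathrm{map}\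 \mathrm{encode}\ xs))$. A substitution is any function $\sigma:\mathcal V\to\Lambda$; $\iota=v$ is the identity substitution; $(\sigma,x:=N)(y)=N$ if $y=x$ and $\sigma\,y$ otherwise. For a substitution $\sigma$ and a list $xs$ of variables, $X(\sigma,xs)=X'(\text{concatenation of the lists }\mathrm{fv}(\sigma\,y)\text{ for }y\in xs)$. The action $M\bullet\sigma$ is defined by structural recursion: $c\,k\bullet\sigma=c\,k$; $v\,x\bullet\sigma=\sigma\,x$; $(M\cdot N)\bullet\sigma=(M\bullet\sigma)\cdot(N\bullet\sigma)$; $(\lambda[x:A]M)\bullet\sigma=\lambda[y:A\bullet\sigma](M\bullet(\sigma,x:=v\,y))$ with $y=X(\sigma,\mathrm{fv}\,M-x)$; $(\Pi[x:A]B)\bullet\sigma=\Pi[y:A\bullet\sigma](B\bullet(\sigma,x:=v\,y))$ with $y=X(\sigma,\mathrm{fv}\,B-x)$. Unary substitution is $M[x:=N]=M\bullet(\iota,x:=N)$. $\alpha$-conversion $\sim_\alpha$ is the inductively defined relation with rules: $c\,k\sim_\alpha c\,k$; $v\,x\sim_\alpha v\,x$; $M\cdot N\sim_\alpha M'\cdot N'$ if $M\sim_\alpha M'$ and $N\sim_\alpha N'$; $\lambda[x:A]M\sim_\alpha\lambda[x':A']M'$ if $A\sim_\alpha A'$ and there is a variable $y$ with $y\notin\mathrm{fv}\,M-x$, $y\notin\mathrm{fv}\,M'-x'$ and $M[x:=v\,y]\equiv M'[x':=v\,y]$; and the same rule with $\Pi$ in place of $\lambda$. $\beta$-contraction is $(\lambda[x:A]M)\cdot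 N\ \triangleright_\beta\ M[x:=N]$. One-step $\beta$-reduction $\to_\beta$ is its contextual closure, inductively: $M\to_\beta N$ if $M\triangleright_\beta N$; $\lambda[x:A]M\to_\beta\lambda[x:A]M'$ and $\Pi[x:A]M\to_\beta\Pi[x:A]M'$ if $M\to_\beta M'$; $\lambda[x:A]M\to_\beta\lambda[x:A']M$ and $\Pi[x:A]M\to_\beta\Pi[x:A']M$ if $A\to_\beta A'$; $M\cdot P\to_\beta N\cdot P$ and $P\cdot M\to_\beta P\cdot N$ if $M\to_\beta N$. $\beta$-conversion $\simeq_\beta$ is the equivalence (reflexive–symmetric–transitive) closure of $\sim_\alpha\cup\to_\beta$. Pure Type System: fix a binary relation $\mathcal A\subseteq\mathcal C\times\mathcal C$ (axioms) and a ternary relation $\mathcal R\subseteq\mathcal C\times\mathcal C\times\mathcal C$ (rules). A context is a finite list of pairs $(x,A)$ with $x\in\mathcal V$, $A\in\Lambda$; $\Gamma,x:A$ denotes the list $(x,A)::\Gamma$; $\mathrm{dom}\,\Gamma$ is the list of first components; $(x,A)\in\Gamma$ is list membership. The judgments $\Gamma\ \mathrm{ok}$ and $\Gamma\vdash M:A$ are defined mutually inductively by: (nil) $[\,]\ \mathrm{ok}$; (cons) if $\Gamma\ \mathrm{ok}$, $\Gamma\vdash A:c\,s$ and $x\notin\mathrm{dom}\,\Gamma$ then $\Gamma,x:A\ \mathrm{ok}$; (sort) if $\Gamma\ \mathrm{ok}$ and $\mathcal A\,s_1\,s_2$ then $\Gamma\vdash c\,s_1:c\,s_2$; (var) if $\Gamma\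 \mathrm{ok}$ and $(x,A)\in\Gamma$ then $\Gamma\vdash v\,x:A$; (prod) if $\mathcal R\,s_1\,s_2\,s_3$, $\Gamma\vdash A:c\,s_1$ and for every $y\notin\mathrm{dom}\,\Gamma$, $\Gamma,y:A\vdash B[x:=v\,y]:c\,s_2$, then $\Gamma\vdash\Pi[x:A]B:c\,s_3$; (abs) if $\mathcal R\,s_1\,s_2\,s_3$, $\Gamma\vdash A:c\,s_1$, for every $z\notin\mathrm{dom}\,\Gamma$, $\Gamma,z:A\vdash B[y:=v\,z]:c\,s_2$, and for every $z\notin\mathrm{dom}\,\Gamma$, $\Gamma,z:A\vdash M[x:=v\,z]:B[y:=v\,z]$, then $\Gamma\vdash\lambda[x:A]M:\Pi[y:A]B$; (app) if $\Gamma\vdash M:\Pi[x:A]B$, $\Gamma\vdash N:A$ and $\Gamma\vdash B[x:=N]:c\,s$ for some $s$, then $\Gamma\vdash M\cdot N:B[x:=N]$; (conv) if $\Gamma\vdash M:A$, $A\simeq_\beta B$ and $\Gamma\vdash B:c\,s$ for some $s$, then $\Gamma\vdash M:B$. (The premises quantified over all fresh names in (prod) and (abs) are infinitely branching.) *)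

theory Defs
  imports Main
begin

datatype ('v, 'c) trm =
    Const 'c
  | Var 'v
  | Lam 'v "('v, 'c) trm" "('v, 'c) trm"   \<comment> \<open>Lam x A M  =  lambda[x:A]M\<close>
  | Pi 'v "('v, 'c) trm" "('v, 'c) trm"    \<comment> \<open>Pi x A B  =  Pi[x:A]B\<close>
  | App "('v, 'c) trm" "('v, 'c) trm"

primrec fv :: "('v, 'c) trm \<Rightarrow> 'v list" where
  "fv (Const k) = []"
| "fv (Var x) = [x]"
| "fv (Lam x A M) = fv A @ removeAll x (fv M)"
| "fv (Pi x A B) = fv A @ removeAll x (fv B)"
| "fv (App M N) = fv M @ fv N"

definition Xfresh' :: "('v \<Rightarrow> nat) \<Rightarrow> (nat \<Rightarrow> 'v) \<Rightarrow> (nat list \<Rightarrow> nat) \<Rightarrow> 'v list \<Rightarrow> 'v" where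
  "Xfresh' enc dec chi xs = dec (chi (map enc xs))"

definition Xfresh :: "('v \<Rightarrow> nat) \<Rightarrow> (nat \<Rightarrow> 'v) \<Rightarrow> (nat list \<Rightarrow> nat)
    \<Rightarrow> ('v \<Rightarrow> ('v, 'c) trm) \<Rightarrow> 'v list \<Rightarrow> 'v" where
  "Xfresh enc dec chi \<sigma> xs = Xfresh' enc dec chi (concat (map (\<lambda>y. fv (\<sigma> y)) xs))"

primrec sact :: "('v \<Rightarrow> nat) \<Rightarrow> (nat \<Rightarrow> 'v) \<Rightarrow> (nat list \<Rightarrow> nat)
    \<Rightarrow> ('v, 'c) trm \<Rightarrow> ('v \<Rightarrow> ('v, 'c) trm) \<Rightarrow> ('v, 'c) trm" where
  "sact enc dec chi (Const k) \<sigma> = Const k"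
| "sact enc dec chi (Var x) \<sigma> = \<sigma> x"
| "sact enc dec chi (App M N) \<sigma> = App (sact enc dec chi M \<sigma>) (sact enc dec chi N \<sigma>)"
| "sact enc dec chi (Lam x A M) \<sigma> =
     (let y = Xfresh enc dec chi \<sigma> (removeAll x (fv M))
      in Lam y (sact enc dec chi A \<sigma>) (sact enc dec chi M (\<sigma>(x := Var y))))"
| "sact enc dec chi (Pi x A B) \<sigma> =
     (let y = Xfresh enc dec chi \<sigma> (removeAll x (fv B))
      in Pi y (sact enc dec chi A \<sigma>) (sact enc dec chi B (\<sigma>(x := Var y))))"

definition usubst :: "('v \<Rightarrow> nat) \<Rightarrow> (nat \<Rightarrow> 'v) \<Rightarrow> (nat list \<Rightarrow> nat)
    \<Rightarrow> ('v, 'c) trm \<Rightarrow> 'v \<Rightarrow> ('v, 'c) trm \<Rightarrow> ('v, 'c) trm" where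
  "usubst enc dec chi M x N = sact enc dec chi M (Var(x := N))"

inductive alpha :: "('v \<Rightarrow> nat) \<Rightarrow> (nat \<Rightarrow> 'v) \<Rightarrow> (nat list \<Rightarrow> nat)
    \<Rightarrow> ('v, 'c) trm \<Rightarrow> ('v, 'c) trm \<Rightarrow> bool"
  for enc dec chi where
  alpha_const: "alpha enc dec chi (Const k) (Const k)"
| alpha_var: "alpha enc dec chi (Var x) (Var x)"
| alpha_app: "alpha enc dec chi M M' \<Longrightarrow> alpha enc dec chi N N' \<Longrightarrow>
     alpha enc dec chi (App M N) (App M' N')"
| alpha_lam: "alpha enc dec chi A A' \<Longrightarrow> y \<notin> set (removeAll x (fv M)) \<Longrightarrow>
     y \<notin> set (removeAll x' (fv M')) \<Longrightarrow>
     usubst enc dec chi M x (Var y) = usubst enc dec chi M' x' (Var y) \<Longrightarrow>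
     alpha enc dec chi (Lam x A M) (Lam x' A' M')"
| alpha_pi: "alpha enc dec chi A A' \<Longrightarrow> y \<notin> set (removeAll x (fv M)) \<Longrightarrow>
     y \<notin> set (removeAll x' (fv M')) \<Longrightarrow>
     usubst enc dec chi M x (Var y) = usubst enc dec chi M' x' (Var y) \<Longrightarrow>
     alpha enc dec chi (Pi x A M) (Pi x' A' M')"

inductive beta_contr :: "('v \<Rightarrow> nat) \<Rightarrow> (nat \<Rightarrow> 'v) \<Rightarrow> (nat list \<Rightarrow> nat)
    \<Rightarrow> ('v, 'c) trm \<Rightarrow> ('v, 'c) trm \<Rightarrow> bool"
  for enc dec chi where
  "beta_contr enc dec chi (App (Lam x A M) N) (usubst enc dec chi M x N)"

inductive beta :: "('v \<Rightarrow> nat) \<Rightarrow> (nat \<Rightarrow> 'v) \<Rightarrow> (nat list \<Rightarrow> nat)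
    \<Rightarrow> ('v, 'c) trm \<Rightarrow> ('v, 'c) trm \<Rightarrow> bool"
  for enc dec chi where
  beta_base: "beta_contr enc dec chi M N \<Longrightarrow> beta enc dec chi M N"
| beta_lam_body: "beta enc dec chi M M' \<Longrightarrow> beta enc dec chi (Lam x A M) (Lam x A M')"
| beta_pi_body: "beta enc dec chi M M' \<Longrightarrow> beta enc dec chi (Pi x A M) (Pi x A M')"
| beta_lam_dom: "beta enc dec chi A A' \<Longrightarrow> beta enc dec chi (Lam x A M) (Lam x A' M)"
| beta_pi_dom: "beta enc dec chi A A' \<Longrightarrow> beta enc dec chi (Pi x A M) (Pi x A' M)"
| beta_app_l: "beta enc dec chi M N \<Longrightarrow> beta enc dec chi (App M P) (App N P)"
| beta_app_r: "beta enc dec chi M N \<Longrightarrow> beta enc dec chi (App P M) (App P N)"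

definition beta_conv :: "('v \<Rightarrow> nat) \<Rightarrow> (nat \<Rightarrow> 'v) \<Rightarrow> (nat list \<Rightarrow> nat)
    \<Rightarrow> ('v, 'c) trm \<Rightarrow> ('v, 'c) trm \<Rightarrow> bool" where
  "beta_conv enc dec chi = equivclp (sup (alpha enc dec chi) (beta enc dec chi))"

type_synonym ('v, 'c) ctx = "('v \<times> ('v, 'c) trm) list"

text \<open>PTS judgments; Ax = axioms, Rl = rules. Context extension Gamma,x:A is (x,A) # Gamma.\<close>
inductive ctx_ok :: "('v \<Rightarrow> nat) \<Rightarrow> (nat \<Rightarrow> 'v) \<Rightarrow> (nat list \<Rightarrow> nat)
    \<Rightarrow> ('c \<Rightarrow> 'c \<Rightarrow> bool) \<Rightarrow> ('c \<Rightarrow> 'c \<Rightarrow> 'c \<Rightarrow> bool) \<Rightarrow> ('v, 'c) ctx \<Rightarrow> bool"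
  and typing :: "('v \<Rightarrow> nat) \<Rightarrow> (nat \<Rightarrow> 'v) \<Rightarrow> (nat list \<Rightarrow> nat)
    \<Rightarrow> ('c \<Rightarrow> 'c \<Rightarrow> bool) \<Rightarrow> ('c \<Rightarrow> 'c \<Rightarrow> 'c \<Rightarrow> bool) \<Rightarrow> ('v, 'c) ctx
    \<Rightarrow> ('v, 'c) trm \<Rightarrow> ('v, 'c) trm \<Rightarrow> bool"
  for enc dec chi Ax Rl where
  ok_nil: "ctx_ok enc dec chi Ax Rl []"
| ok_cons: "ctx_ok enc dec chi Ax Rl \<Gamma> \<Longrightarrow> typing enc dec chi Ax Rl \<Gamma> A (Const s) \<Longrightarrow>
     x \<notin> set (map fst \<Gamma>) \<Longrightarrow> ctx_ok enc dec chi Ax Rl ((x, A) # \<Gamma>)"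
| ty_sort: "ctx_ok enc dec chi Ax Rl \<Gamma> \<Longrightarrow> Ax s1 s2 \<Longrightarrow>
     typing enc dec chi Ax Rl \<Gamma> (Const s1) (Const s2)"
| ty_var: "ctx_ok enc dec chi Ax Rl \<Gamma> \<Longrightarrow> (x, A) \<in> set \<Gamma> \<Longrightarrow>
     typing enc dec chi Ax Rl \<Gamma> (Var x) A"
| ty_prod: "Rl s1 s2 s3 \<Longrightarrow> typing enc dec chi Ax Rl \<Gamma> A (Const s1) \<Longrightarrow>
     (\<forall>y. y \<notin> set (map fst \<Gamma>) \<longrightarrow>
        typing enc dec chi Ax Rl ((y, A) # \<Gamma>) (usubst enc dec chi B x (Var y)) (Const s2)) \<Longrightarrow>
     typing enc dec chi Ax Rl \<Gamma> (Pi x A B) (Const s3)"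
| ty_abs: "Rl s1 s2 s3 \<Longrightarrow> typing enc dec chi Ax Rl \<Gamma> A (Const s1) \<Longrightarrow>
     (\<forall>z. z \<notin> set (map fst \<Gamma>) \<longrightarrow>
        typing enc dec chi Ax Rl ((z, A) # \<Gamma>) (usubst enc dec chi B y (Var z)) (Const s2)) \<Longrightarrow>
     (\<forall>z. z \<notin> set (map fst \<Gamma>) \<longrightarrow>
        typing enc dec chi Ax Rl ((z, A) # \<Gamma>) (usubst enc dec chi M x (Var z))
          (usubst enc dec chi B y (Var z))) \<Longrightarrow>
     typing enc dec chi Ax Rl \<Gamma> (Lam x A M) (Pi y A B)"
| ty_app: "typing enc dec chi Ax Rl \<Gamma> M (Pi x A B) \<Longrightarrow> typing enc dec chi Ax Rl \<Gamma> N A \<Longrightarrow>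
     typing enc dec chi Ax Rl \<Gamma> (usubst enc dec chi B x N) (Const s) \<Longrightarrow>
     typing enc dec chi Ax Rl \<Gamma> (App M N) (usubst enc dec chi B x N)"
| ty_conv: "typing enc dec chi Ax Rl \<Gamma> M A \<Longrightarrow> beta_conv enc dec chi A B \<Longrightarrow>
     typing enc dec chi Ax Rl \<Gamma> B (Const s) \<Longrightarrow> typing enc dec chi Ax Rl \<Gamma> M B"

end

theory Submission
  imports Defs
begin


locale pts =
  fixes enc :: "'v \<Rightarrow> nat" and dec :: "nat \<Rightarrow> 'v" and chi :: "nat list \<Rightarrow> nat"
  assumes enc_dec: "\<forall>n. enc (dec n) = n"
    and chi_fresh: "\<forall>ns. chi ns \<notin> set ns"
begin

abbreviation S :: "('v, 'c) trm \<Rightarrow> ('v \<Rightarrow> ('v, 'c) trm) \<Rightarrow> ('v, 'c) trm" where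
  "S M \<sigma> \<equiv> sact enc dec chi M \<sigma>"

abbreviation XF :: "('v \<Rightarrow> ('v, 'c) trm) \<Rightarrow> 'v list \<Rightarrow> 'v" where
  "XF \<sigma> xs \<equiv> Xfresh enc dec chi \<sigma> xs"

lemma Xfresh'_notin: "Xfresh' enc dec chi xs \<notin> set xs"
proof
  assume "Xfresh' enc dec chi xs \<in> set xs"
  then have "enc (dec (chi (map enc xs))) \<in> set (map enc xs)"
    unfolding Xfresh'_def by simp
  then have "chi (map enc xs) \<in> set (map enc xs)" by (simp only: enc_dec[rule_format])
  then show False using chi_fresh by blast
qed

lemma exists_fresh: "\<exists>w. w \<notin> set (xs :: 'v list)"
  by (rule exI, rule Xfresh'_notin)

lemma Xfresh_notin: "u \<in> set xs \<Longrightarrow> XF \<sigma> xs \<notin> set (fv (\<sigma> u))"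
  using Xfresh'_notin[of "concat (map (\<lambda>y. fv (\<sigma> y)) xs)"]
  unfolding Xfresh_def by auto

lemma removeAll_concat_upd:
  "(\<forall>u\<in>set xs. u \<noteq> x \<longrightarrow> y \<notin> set (fv (\<sigma> u))) \<Longrightarrow>
   removeAll y (concat (map (\<lambda>u. fv ((\<sigma>(x := Var y)) u)) xs)) =
   concat (map (\<lambda>u. fv (\<sigma> u)) (removeAll x xs))"
  by (induction xs) auto

lemma fv_sact: "fv (S M \<sigma>) = concat (map (\<lambda>u. fv (\<sigma> u)) (fv M))"
proof (induction M arbitrary: \<sigma>)
  case (Lam x A M)
  have h: "\<forall>u\<in>set (fv M). u \<noteq> x \<longrightarrow> XF \<sigma> (removeAll x (fv M)) \<notin> set (fv (\<sigma> u))"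
    by (auto intro!: Xfresh_notin)
  show ?case using Lam removeAll_concat_upd[OF h] by (simp add: Let_def)
next
  case (Pi x A M)
  have h: "\<forall>u\<in>set (fv M). u \<noteq> x \<longrightarrow> XF \<sigma> (removeAll x (fv M)) \<notin> set (fv (\<sigma> u))"
    by (auto intro!: Xfresh_notin)
  show ?case using Pi removeAll_concat_upd[OF h] by (simp add: Let_def)
qed auto

lemma fv_sact_rem:
  assumes "y = XF \<sigma> (removeAll x (fv M))"
  shows "removeAll y (fv (S M (\<sigma>(x := Var y)))) = concat (map (\<lambda>u. fv (\<sigma> u)) (removeAll x (fv M)))"
proof -
  have h: "\<forall>u\<in>set (fv M). u \<noteq> x \<longrightarrow> y \<notin> set (fv (\<sigma> u))"
    unfolding assms by (auto intro!: Xfresh_notin)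
  show ?thesis using removeAll_concat_upd[OF h] by (simp add: fv_sact)
qed

lemma sact_cong: "(\<forall>u\<in>set (fv M). \<sigma> u = \<tau> u) \<Longrightarrow> S M \<sigma> = S M \<tau>"
proof (induction M arbitrary: \<sigma> \<tau>)
  case (Lam x A M)
  have "map (\<lambda>y. fv (\<sigma> y)) (removeAll x (fv M)) = map (\<lambda>y. fv (\<tau> y)) (removeAll x (fv M))"
    using Lam.prems by (intro map_cong) auto
  then have e: "XF \<sigma> (removeAll x (fv M)) = XF \<tau> (removeAll x (fv M))"
    unfolding Xfresh_def by (simp only:)
  have A: "S A \<sigma> = S A \<tau>" using Lam.prems by (intro Lam.IH(1)) simp
  have B: "\<And>y. S M (\<sigma>(x := Var y)) = S M (\<tau>(x := Var y))"
    using Lam.prems by (intro Lam.IH(2)) simp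
  show ?case unfolding sact.simps Let_def e A B ..
next
  case (Pi x A M)
  have "map (\<lambda>y. fv (\<sigma> y)) (removeAll x (fv M)) = map (\<lambda>y. fv (\<tau> y)) (removeAll x (fv M))"
    using Pi.prems by (intro map_cong) auto
  then have e: "XF \<sigma> (removeAll x (fv M)) = XF \<tau> (removeAll x (fv M))"
    unfolding Xfresh_def by (simp only:)
  have A: "S A \<sigma> = S A \<tau>" using Pi.prems by (intro Pi.IH(1)) simp
  have B: "\<And>y. S M (\<sigma>(x := Var y)) = S M (\<tau>(x := Var y))"
    using Pi.prems by (intro Pi.IH(2)) simp
  show ?case unfolding sact.simps Let_def e A B ..
qed auto

lemma concat_map_concat_map:
  "concat (map f (concat (map g xs))) = concat (map (\<lambda>u. concat (map f (g u))) xs)"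
  by (induction xs) auto

lemma sact_comp: "S (S M \<sigma>) \<tau> = S M (\<lambda>u. S (\<sigma> u) \<tau>)"
proof (induction M arbitrary: \<sigma> \<tau>)
  case (Lam x A M)
  define y where "y = XF \<sigma> (removeAll x (fv M))"
  define y' where "y' = XF \<tau> (removeAll y (fv (S M (\<sigma>(x := Var y)))))"
  have fy: "\<forall>u\<in>set (removeAll x (fv M)). y \<notin> set (fv (\<sigma> u))"
    using Xfresh_notin y_def by blast
  have e: "y' = XF (\<lambda>u. S (\<sigma> u) \<tau>) (removeAll x (fv M))"
    unfolding y'_def fv_sact_rem[OF y_def] Xfresh_def
    by (simp add: fv_sact concat_map_concat_map)
  have b: "S (S M (\<sigma>(x := Var y))) (\<tau>(y := Var y')) = S M ((\<lambda>u. S (\<sigma> u) \<tau>)(x := Var y'))"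
    unfolding Lam.IH(2)
  proof (rule sact_cong, intro ballI)
    fix u assume "u \<in> set (fv M)"
    then show "S ((\<sigma>(x := Var y)) u) (\<tau>(y := Var y')) = ((\<lambda>u. S (\<sigma> u) \<tau>)(x := Var y')) u"
      using fy by (cases "u = x") (auto intro!: sact_cong)
  qed
  show ?case using Lam.IH(1) b by (simp add: Let_def y_def[symmetric] y'_def[symmetric] e[symmetric])
next
  case (Pi x A M)
  define y where "y = XF \<sigma> (removeAll x (fv M))"
  define y' where "y' = XF \<tau> (removeAll y (fv (S M (\<sigma>(x := Var y)))))"
  have fy: "\<forall>u\<in>set (removeAll x (fv M)). y \<notin> set (fv (\<sigma> u))"
    using Xfresh_notin y_def by blast
  have e: "y' = XF (\<lambda>u. S (\<sigma> u) \<tau>) (removeAll x (fv M))"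
    unfolding y'_def fv_sact_rem[OF y_def] Xfresh_def
    by (simp add: fv_sact concat_map_concat_map)
  have b: "S (S M (\<sigma>(x := Var y))) (\<tau>(y := Var y')) = S M ((\<lambda>u. S (\<sigma> u) \<tau>)(x := Var y'))"
    unfolding Pi.IH(2)
  proof (rule sact_cong, intro ballI)
    fix u assume "u \<in> set (fv M)"
    then show "S ((\<sigma>(x := Var y)) u) (\<tau>(y := Var y')) = ((\<lambda>u. S (\<sigma> u) \<tau>)(x := Var y')) u"
      using fy by (cases "u = x") (auto intro!: sact_cong)
  qed
  show ?case using Pi.IH(1) b by (simp add: Let_def y_def[symmetric] y'_def[symmetric] e[symmetric])
qed auto


abbreviation nrm :: "('v, 'c) trm \<Rightarrow> ('v, 'c) trm" where
  "nrm M \<equiv> S M Var"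

abbreviation bc :: "('v, 'c) trm \<Rightarrow> ('v, 'c) trm \<Rightarrow> bool" where
  "bc \<equiv> beta_conv enc dec chi"

abbreviation al :: "('v, 'c) trm \<Rightarrow> ('v, 'c) trm \<Rightarrow> bool" where
  "al \<equiv> alpha enc dec chi"

abbreviation bt :: "('v, 'c) trm \<Rightarrow> ('v, 'c) trm \<Rightarrow> bool" where
  "bt \<equiv> beta enc dec chi"

lemma nrm_sact: "nrm (S M \<sigma>) = S M (\<lambda>u. nrm (\<sigma> u))"
  by (rule sact_comp)

lemma sact_nrm: "S (nrm M) \<sigma> = S M \<sigma>"
  by (simp add: sact_comp)

lemma nrm_nrm: "nrm (nrm M) = nrm M"
  by (rule sact_nrm)

lemma sact_var_id: "S M (\<lambda>u. Var u) = nrm M"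
  by (simp add: eta_contract_eq)

lemma Xfresh_Var: "XF Var xs = Xfresh' enc dec chi xs"
  unfolding Xfresh_def by (induction xs) simp_all

lemma Xfresh_Var_notin: "XF Var xs \<notin> set xs"
  unfolding Xfresh_Var by (rule Xfresh'_notin)

lemma rename_body:
  assumes "y \<notin> set (removeAll x (fv M))"
  shows "S (usubst enc dec chi M x (Var y)) (\<sigma>(y := P)) = S M (\<sigma>(x := P))"
  unfolding usubst_def sact_comp
proof (rule sact_cong, intro ballI)
  fix u assume "u \<in> set (fv M)"
  then show "S ((Var(x := Var y)) u) (\<sigma>(y := P)) = (\<sigma>(x := P)) u"
    using assms by (cases "u = x") auto
qed

lemma concat_map_var_upd: "concat (map (\<lambda>u. fv ((Var(x := Var y)) u)) xs) = map (\<lambda>u. if u = x then y else u) xs"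
  by (induction xs) auto

lemma fv_usubst_var: "fv (usubst enc dec chi M x (Var y)) = map (\<lambda>u. if u = x then y else u) (fv M)"
  unfolding usubst_def fv_sact by (rule concat_map_var_upd)

lemma removeAll_map_upd:
  "y \<notin> set (removeAll x xs) \<Longrightarrow> removeAll y (map (\<lambda>u. if u = x then y else u) xs) = removeAll x xs"
  by (induction xs) auto

lemma alpha_sact: "al C D \<Longrightarrow> S C \<sigma> = S D \<sigma>"
proof (induction arbitrary: \<sigma> rule: alpha.induct)
  case (alpha_lam A A' y x M x' M')
  have "removeAll y (fv (usubst enc dec chi M x (Var y))) = removeAll y (fv (usubst enc dec chi M' x' (Var y)))"
    using alpha_lam.hyps(4) by simp
  then have L: "removeAll x (fv M) = removeAll x' (fv M')"
    unfolding fv_usubst_var using removeAll_map_upd alpha_lam.hyps(2,3) by metis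
  define w where "w = XF \<sigma> (removeAll x (fv M))"
  have w': "w = XF \<sigma> (removeAll x' (fv M'))" using L w_def by simp
  have "S (usubst enc dec chi M x (Var y)) (\<sigma>(y := Var w)) = S (usubst enc dec chi M' x' (Var y)) (\<sigma>(y := Var w))"
    using alpha_lam.hyps(4) by simp
  then have B: "S M (\<sigma>(x := Var w)) = S M' (\<sigma>(x' := Var w))"
    using rename_body alpha_lam.hyps(2,3) by metis
  show ?case using alpha_lam.IH B by (simp add: Let_def w_def[symmetric] w'[symmetric])
next
  case (alpha_pi A A' y x M x' M')
  have "removeAll y (fv (usubst enc dec chi M x (Var y))) = removeAll y (fv (usubst enc dec chi M' x' (Var y)))"
    using alpha_pi.hyps(4) by simp
  then have L: "removeAll x (fv M) = removeAll x' (fv M')"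
    unfolding fv_usubst_var using removeAll_map_upd alpha_pi.hyps(2,3) by metis
  define w where "w = XF \<sigma> (removeAll x (fv M))"
  have w': "w = XF \<sigma> (removeAll x' (fv M'))" using L w_def by simp
  have "S (usubst enc dec chi M x (Var y)) (\<sigma>(y := Var w)) = S (usubst enc dec chi M' x' (Var y)) (\<sigma>(y := Var w))"
    using alpha_pi.hyps(4) by simp
  then have B: "S M (\<sigma>(x := Var w)) = S M' (\<sigma>(x' := Var w))"
    using rename_body alpha_pi.hyps(2,3) by metis
  show ?case using alpha_pi.IH B by (simp add: Let_def w_def[symmetric] w'[symmetric])
qed auto

lemma alpha_refl: "al M M"
proof (induction M)
  case (Lam x A M)
  obtain z where "z \<notin> set (removeAll x (fv M))" using exists_fresh by blast
  then show ?case using Lam by (intro alpha_lam) auto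
next
  case (Pi x A M)
  obtain z where "z \<notin> set (removeAll x (fv M))" using exists_fresh by blast
  then show ?case using Pi by (intro alpha_pi) auto
qed (auto intro: alpha.intros)

lemma alpha_nrm: "al M (nrm M)"
proof (induction M)
  case (Lam x A M)
  define y where "y = Xfresh' enc dec chi (removeAll x (fv M))"
  have y: "y \<notin> set (removeAll x (fv M))" unfolding y_def by (rule Xfresh'_notin)
  obtain z where z: "z \<notin> set (removeAll x (fv M) @ removeAll y (fv (S M (Var(x := Var y)))))"
    using exists_fresh by blast
  have e: "usubst enc dec chi M x (Var z) = usubst enc dec chi (S M (Var(x := Var y))) y (Var z)"
    using rename_body[OF y, of Var "Var z"] by (simp add: usubst_def)
  have n: "nrm (Lam x A M) = Lam y (nrm A) (S M (Var(x := Var y)))" by (simp add: Let_def y_def Xfresh_Var)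
  show ?case unfolding n by (rule alpha_lam[where y = z, OF Lam.IH(1)]) (use z e in auto)
next
  case (Pi x A M)
  define y where "y = Xfresh' enc dec chi (removeAll x (fv M))"
  have y: "y \<notin> set (removeAll x (fv M))" unfolding y_def by (rule Xfresh'_notin)
  obtain z where z: "z \<notin> set (removeAll x (fv M) @ removeAll y (fv (S M (Var(x := Var y)))))"
    using exists_fresh by blast
  have e: "usubst enc dec chi M x (Var z) = usubst enc dec chi (S M (Var(x := Var y))) y (Var z)"
    using rename_body[OF y, of Var "Var z"] by (simp add: usubst_def)
  have n: "nrm (Pi x A M) = Pi y (nrm A) (S M (Var(x := Var y)))" by (simp add: Let_def y_def Xfresh_Var)
  show ?case unfolding n by (rule alpha_pi[where y = z, OF Pi.IH(1)]) (use z e in auto)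
qed (auto intro: alpha.intros)

lemma nrm_bc: "nrm M = nrm N \<Longrightarrow> bc M N"
proof -
  assume h: "nrm M = nrm N"
  have "bc M (nrm M)" unfolding beta_conv_def by (intro r_into_equivclp sup2I1 alpha_nrm)
  moreover have "bc N (nrm N)" unfolding beta_conv_def by (intro r_into_equivclp sup2I1 alpha_nrm)
  ultimately show ?thesis using h unfolding beta_conv_def by (metis equivclp_sym equivclp_trans)
qed


lemma equivclp_map:
  assumes f: "\<And>a b. r a b \<Longrightarrow> equivclp r' (f a) (f b)" and h: "equivclp r x y"
  shows "equivclp r' (f x) (f y)"
  using h
proof (induction rule: equivclp_induct)
  case base
  then show ?case by (rule equivclp_refl)
next
  case (step y z)
  from step.hyps(2) show ?case
  proof
    assume "r y z" then show ?thesis using step.IH f equivclp_trans by metis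
  next
    assume "r z y" then show ?thesis using step.IH f equivclp_trans equivclp_sym by metis
  qed
qed

lemma bc_lift:
  assumes "\<And>a b. al a b \<Longrightarrow> al (f a) (f b)" "\<And>a b. bt a b \<Longrightarrow> bt (f a) (f b)" "bc x y"
  shows "bc (f x) (f y)"
  using assms(3) unfolding beta_conv_def
  by (rule equivclp_map[rotated]) (use assms(1,2) in \<open>auto intro: r_into_equivclp\<close>)

lemma al_lam_body: "al P P' \<Longrightarrow> al (Lam y T P) (Lam y T P')"
proof -
  assume h: "al P P'"
  obtain z where z: "z \<notin> set (removeAll y (fv P) @ removeAll y (fv P'))" using exists_fresh by blast
  show ?thesis
    by (rule alpha_lam[where y = z, OF alpha_refl]) (use z alpha_sact[OF h] in \<open>auto simp: usubst_def\<close>)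
qed

lemma al_pi_body: "al P P' \<Longrightarrow> al (Pi y T P) (Pi y T P')"
proof -
  assume h: "al P P'"
  obtain z where z: "z \<notin> set (removeAll y (fv P) @ removeAll y (fv P'))" using exists_fresh by blast
  show ?thesis
    by (rule alpha_pi[where y = z, OF alpha_refl]) (use z alpha_sact[OF h] in \<open>auto simp: usubst_def\<close>)
qed

lemma al_lam_dom: "al A A' \<Longrightarrow> al (Lam x A M) (Lam x A' M)"
proof -
  assume h: "al A A'"
  obtain z where z: "z \<notin> set (removeAll x (fv M))" using exists_fresh by blast
  show ?thesis by (rule alpha_lam[where y = z, OF h]) (use z in auto)
qed

lemma al_pi_dom: "al A A' \<Longrightarrow> al (Pi x A M) (Pi x A' M)"
proof -
  assume h: "al A A'"
  obtain z where z: "z \<notin> set (removeAll x (fv M))" using exists_fresh by blast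
  show ?thesis by (rule alpha_pi[where y = z, OF h]) (use z in auto)
qed

lemma bc_lam_body: "bc P P' \<Longrightarrow> bc (Lam y T P) (Lam y T P')"
  by (rule bc_lift[where f = "Lam y T"]) (auto intro: al_lam_body beta_lam_body)
lemma bc_pi_body: "bc P P' \<Longrightarrow> bc (Pi y T P) (Pi y T P')"
  by (rule bc_lift[where f = "Pi y T"]) (auto intro: al_pi_body beta_pi_body)
lemma bc_lam_dom: "bc A A' \<Longrightarrow> bc (Lam x A M) (Lam x A' M)"
  by (rule bc_lift[where f = "\<lambda>A. Lam x A M"]) (auto intro: al_lam_dom beta_lam_dom)
lemma bc_pi_dom: "bc A A' \<Longrightarrow> bc (Pi x A M) (Pi x A' M)"
  by (rule bc_lift[where f = "\<lambda>A. Pi x A M"]) (auto intro: al_pi_dom beta_pi_dom)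
lemma bc_app_l: "bc A A' \<Longrightarrow> bc (App A M) (App A' M)"
  by (rule bc_lift[where f = "\<lambda>A. App A M"]) (auto intro: alpha_app alpha_refl beta_app_l)
lemma bc_app_r: "bc A A' \<Longrightarrow> bc (App M A) (App M A')"
  by (rule bc_lift[where f = "\<lambda>A. App M A"]) (auto intro: alpha_app alpha_refl beta_app_r)

lemma bc_trans: "bc A B \<Longrightarrow> bc B C \<Longrightarrow> bc A C"
  unfolding beta_conv_def by (rule equivclp_trans)
lemma bc_sym: "bc A B \<Longrightarrow> bc B A"
  unfolding beta_conv_def by (rule equivclp_sym)
lemma bt_bc: "bt A B \<Longrightarrow> bc A B"
  unfolding beta_conv_def by (intro r_into_equivclp sup2I2)

lemma beta_fv: "bt M N \<Longrightarrow> set (fv N) \<subseteq> set (fv M)"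
proof (induction rule: beta.induct)
  case (beta_base M N)
  then show ?case
    by (cases rule: beta_contr.cases) (auto simp: usubst_def fv_sact split: if_splits)
qed auto

lemma fresh_upd_cond:
  "\<forall>u\<in>set (removeAll x xs). y \<notin> set (fv (\<sigma> u)) \<Longrightarrow> \<forall>u\<in>set xs. u \<noteq> x \<longrightarrow> y \<notin> set (fv (\<sigma> u))"
  by auto

definition XS :: "('v \<Rightarrow> ('v, 'c) trm) \<Rightarrow> 'v \<Rightarrow> ('v, 'c) trm \<Rightarrow> 'v" where
  "XS \<sigma> x M = Xfresh' enc dec chi (concat (map (\<lambda>u. fv (\<sigma> u)) (removeAll x (fv M))))"

lemma nrm_body:
  assumes y: "\<forall>u\<in>set (removeAll x (fv M)). y \<notin> set (fv (\<sigma> u))"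
  shows "Xfresh' enc dec chi (removeAll y (fv (S M (\<sigma>(x := Var y))))) = XS \<sigma> x M"
    and "S (S M (\<sigma>(x := Var y))) (Var(y := Var w)) = S M ((\<lambda>u. nrm (\<sigma> u))(x := Var w))"
proof -
  have r: "removeAll y (fv (S M (\<sigma>(x := Var y)))) = concat (map (\<lambda>u. fv (\<sigma> u)) (removeAll x (fv M)))"
    unfolding fv_sact by (rule removeAll_concat_upd[OF fresh_upd_cond[OF y]])
  show "Xfresh' enc dec chi (removeAll y (fv (S M (\<sigma>(x := Var y))))) = XS \<sigma> x M"
    unfolding r XS_def ..
  show "S (S M (\<sigma>(x := Var y))) (Var(y := Var w)) = S M ((\<lambda>u. nrm (\<sigma> u))(x := Var w))"
    unfolding sact_comp
  proof (rule sact_cong, intro ballI)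
    fix u assume u: "u \<in> set (fv M)"
    show "S ((\<sigma>(x := Var y)) u) (Var(y := Var w)) = ((\<lambda>u. nrm (\<sigma> u))(x := Var w)) u"
    proof (cases "u = x")
      case False
      then have "y \<notin> set (fv (\<sigma> u))" using y u by auto
      then have "S (\<sigma> u) (Var(y := Var w)) = S (\<sigma> u) Var" by (intro sact_cong) auto
      then show ?thesis using False by simp
    qed simp
  qed
qed

lemma nrm_lam_sact:
  assumes y: "\<forall>u\<in>set (removeAll x (fv M)). y \<notin> set (fv (\<sigma> u))"
  shows "nrm (Lam y T (S M (\<sigma>(x := Var y)))) =
    Lam (XS \<sigma> x M) (nrm T) (S M ((\<lambda>u. nrm (\<sigma> u))(x := Var (XS \<sigma> x M))))"
  using nrm_body[OF y] by (simp add: Let_def Xfresh_Var)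

lemma nrm_pi_sact:
  assumes y: "\<forall>u\<in>set (removeAll x (fv M)). y \<notin> set (fv (\<sigma> u))"
  shows "nrm (Pi y T (S M (\<sigma>(x := Var y)))) =
    Pi (XS \<sigma> x M) (nrm T) (S M ((\<lambda>u. nrm (\<sigma> u))(x := Var (XS \<sigma> x M))))"
  using nrm_body[OF y] by (simp add: Let_def Xfresh_Var)

lemma XF_fresh: "\<forall>u\<in>set xs. XF \<sigma> xs \<notin> set (fv (\<sigma> u))"
  by (auto intro!: Xfresh_notin)

lemma sact_lam: "S (Lam x T M) \<sigma> = Lam (XF \<sigma> (removeAll x (fv M))) (S T \<sigma>) (S M (\<sigma>(x := Var (XF \<sigma> (removeAll x (fv M))))))"
  by (simp add: Let_def)
lemma sact_pi: "S (Pi x T M) \<sigma> = Pi (XF \<sigma> (removeAll x (fv M))) (S T \<sigma>) (S M (\<sigma>(x := Var (XF \<sigma> (removeAll x (fv M))))))"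
  by (simp add: Let_def)

lemma beta_sact: "bt M N \<Longrightarrow> bc (S M \<sigma>) (S N \<sigma>)"
proof (induction arbitrary: \<sigma> rule: beta.induct)
  case (beta_base M N \<sigma>)
  then show ?case
  proof (cases rule: beta_contr.cases)
    case (1 x A M0 N0)
    define y where "y = XF \<sigma> (removeAll x (fv M0))"
    have yf: "\<forall>u\<in>set (removeAll x (fv M0)). y \<notin> set (fv (\<sigma> u))" unfolding y_def by (rule XF_fresh)
    have SM: "S M \<sigma> = App (Lam y (S A \<sigma>) (S M0 (\<sigma>(x := Var y)))) (S N0 \<sigma>)"
      unfolding 1 y_def by (simp add: Let_def)
    have st: "bt (S M \<sigma>) (usubst enc dec chi (S M0 (\<sigma>(x := Var y))) y (S N0 \<sigma>))"
      unfolding SM by (intro beta.beta_base beta_contr.intros)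
    have e1: "nrm (usubst enc dec chi (S M0 (\<sigma>(x := Var y))) y (S N0 \<sigma>)) =
       S M0 ((\<lambda>u. nrm (\<sigma> u))(x := nrm (S N0 \<sigma>)))"
      unfolding usubst_def nrm_sact sact_comp
    proof (rule sact_cong, intro ballI, goal_cases)
      case (1 u)
      then show ?case
      proof (cases "u = x")
        case False
        then have "y \<notin> set (fv (\<sigma> u))" using yf 1 by auto
        then have "S (\<sigma> u) (\<lambda>u. nrm ((Var(y := S N0 \<sigma>)) u)) = S (\<sigma> u) Var"
          by (intro sact_cong) auto
        then show ?thesis using False by simp
      qed (simp add: nrm_sact)
    qed
    have e2: "nrm (S N \<sigma>) = S M0 ((\<lambda>u. nrm (\<sigma> u))(x := nrm (S N0 \<sigma>)))"
      unfolding 1 usubst_def nrm_sact sact_comp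
    proof (rule sact_cong, intro ballI, goal_cases)
      case (1 u)
      then show ?case by (cases "u = x") (simp_all add: nrm_sact)
    qed
    have "bc (S M \<sigma>) (usubst enc dec chi (S M0 (\<sigma>(x := Var y))) y (S N0 \<sigma>))" by (rule bt_bc[OF st])
    moreover have "bc (usubst enc dec chi (S M0 (\<sigma>(x := Var y))) y (S N0 \<sigma>)) (S N \<sigma>)"
      by (rule nrm_bc) (simp only: e1 e2)
    ultimately show ?thesis by (rule bc_trans)
  qed
next
  case (beta_lam_body M M' x A \<sigma>)
  define y where "y = XF \<sigma> (removeAll x (fv M))"
  define y' where "y' = XF \<sigma> (removeAll x (fv M'))"
  have yf: "\<forall>u\<in>set (removeAll x (fv M)). y \<notin> set (fv (\<sigma> u))" unfolding y_def by (rule XF_fresh)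
  have yf2: "\<forall>u\<in>set (removeAll x (fv M')). y \<notin> set (fv (\<sigma> u))" using yf beta_fv[OF beta_lam_body.hyps] by auto
  have yf': "\<forall>u\<in>set (removeAll x (fv M')). y' \<notin> set (fv (\<sigma> u))" unfolding y'_def by (rule XF_fresh)
  have a: "bc (S (Lam x A M) \<sigma>) (Lam y (S A \<sigma>) (S M' (\<sigma>(x := Var y))))"
    unfolding sact_lam y_def[symmetric] by (rule bc_lam_body[OF beta_lam_body.IH])
  have e: "S (Lam x A M') \<sigma> = Lam y' (S A \<sigma>) (S M' (\<sigma>(x := Var y')))"
    unfolding y'_def by (rule sact_lam)
  have b: "nrm (Lam y (S A \<sigma>) (S M' (\<sigma>(x := Var y)))) = nrm (S (Lam x A M') \<sigma>)"
    unfolding e nrm_lam_sact[OF yf2, of "S A \<sigma>"] nrm_lam_sact[OF yf', of "S A \<sigma>"] ..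
  show ?case by (rule bc_trans[OF a nrm_bc[OF b]])
next
  case (beta_pi_body M M' x A \<sigma>)
  define y where "y = XF \<sigma> (removeAll x (fv M))"
  define y' where "y' = XF \<sigma> (removeAll x (fv M'))"
  have yf: "\<forall>u\<in>set (removeAll x (fv M)). y \<notin> set (fv (\<sigma> u))" unfolding y_def by (rule XF_fresh)
  have yf2: "\<forall>u\<in>set (removeAll x (fv M')). y \<notin> set (fv (\<sigma> u))" using yf beta_fv[OF beta_pi_body.hyps] by auto
  have yf': "\<forall>u\<in>set (removeAll x (fv M')). y' \<notin> set (fv (\<sigma> u))" unfolding y'_def by (rule XF_fresh)
  have a: "bc (S (Pi x A M) \<sigma>) (Pi y (S A \<sigma>) (S M' (\<sigma>(x := Var y))))"
    unfolding sact_pi y_def[symmetric] by (rule bc_pi_body[OF beta_pi_body.IH])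
  have e: "S (Pi x A M') \<sigma> = Pi y' (S A \<sigma>) (S M' (\<sigma>(x := Var y')))"
    unfolding y'_def by (rule sact_pi)
  have b: "nrm (Pi y (S A \<sigma>) (S M' (\<sigma>(x := Var y)))) = nrm (S (Pi x A M') \<sigma>)"
    unfolding e nrm_pi_sact[OF yf2, of "S A \<sigma>"] nrm_pi_sact[OF yf', of "S A \<sigma>"] ..
  show ?case by (rule bc_trans[OF a nrm_bc[OF b]])
next
  case (beta_lam_dom A A' x M \<sigma>)
  show ?case unfolding sact_lam by (rule bc_lam_dom[OF beta_lam_dom.IH])
next
  case (beta_pi_dom A A' x M \<sigma>)
  show ?case unfolding sact_pi by (rule bc_pi_dom[OF beta_pi_dom.IH])
next
  case (beta_app_l M N P \<sigma>)
  show ?case using bc_app_l[OF beta_app_l.IH] by simp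
next
  case (beta_app_r M N P \<sigma>)
  show ?case using bc_app_r[OF beta_app_r.IH] by simp
qed

lemma bc_sact:
  fixes C D :: "('v, 'c) trm"
  shows "bc C D \<Longrightarrow> bc (S C \<sigma>) (S D \<sigma>)"
  unfolding beta_conv_def
proof (rule equivclp_map[where f = "\<lambda>M. S M \<sigma>"])
  fix a b :: "('v, 'c) trm"
  assume "sup al bt a b"
  then show "equivclp (sup al bt) (S a \<sigma>) (S b \<sigma>)"
  proof
    assume "al a b" then show ?thesis using alpha_sact by (metis equivclp_refl)
  next
    assume "bt a b" then show ?thesis using beta_sact[unfolded beta_conv_def] by blast
  qed
qed

end


locale pts2 = pts enc dec chi for enc :: "'v \<Rightarrow> nat" and dec :: "nat \<Rightarrow> 'v" and chi :: "nat list \<Rightarrow> nat" +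
  fixes Ax :: "'c \<Rightarrow> 'c \<Rightarrow> bool" and Rl :: "'c \<Rightarrow> 'c \<Rightarrow> 'c \<Rightarrow> bool"
begin

abbreviation TY :: "('v, 'c) ctx \<Rightarrow> ('v, 'c) trm \<Rightarrow> ('v, 'c) trm \<Rightarrow> bool" where
  "TY \<equiv> typing enc dec chi Ax Rl"
abbreviation OK :: "('v, 'c) ctx \<Rightarrow> bool" where
  "OK \<equiv> ctx_ok enc dec chi Ax Rl"

lemma typing_ok: "TY \<Gamma> M B \<Longrightarrow> OK \<Gamma>"
  by (induction rule: ctx_ok_typing.inducts(2)[where ?P1.0 = "\<lambda>_. True"]) auto

lemma fv_ok_typing:
  shows "OK \<Gamma> \<Longrightarrow> \<forall>p\<in>set \<Gamma>. set (fv (snd p)) \<subseteq> set (map fst \<Gamma>)"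
    and "TY \<Gamma> M B \<Longrightarrow> set (fv M) \<subseteq> set (map fst \<Gamma>)"
proof (induction \<Gamma> and \<Gamma> M B rule: ctx_ok_typing.inducts)
  case (ok_cons \<Gamma> A s x)
  then show ?case by auto
next
  case (ty_var \<Gamma> x A)
  then show ?case by force
next
  case (ty_prod s1 s2 s3 \<Gamma> A B x)
  obtain w where w: "w \<notin> set (map fst \<Gamma> @ fv B)" using exists_fresh by blast
  have wG: "w \<notin> set (map fst \<Gamma>)" using w by simp
  have "set (fv (usubst enc dec chi B x (Var w))) \<subseteq> set (map fst ((w, A) # \<Gamma>))"
    using ty_prod wG by blast
  then have "set (removeAll x (fv B)) \<subseteq> set (map fst \<Gamma>)"
    using w unfolding fv_usubst_var by auto
  then show ?case using ty_prod.IH by auto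
next
  case (ty_abs s1 s2 s3 \<Gamma> A B y M x)
  obtain w where w: "w \<notin> set (map fst \<Gamma> @ fv M)" using exists_fresh by blast
  have wG: "w \<notin> set (map fst \<Gamma>)" using w by simp
  have "set (fv (usubst enc dec chi M x (Var w))) \<subseteq> set (map fst ((w, A) # \<Gamma>))"
    using ty_abs wG by blast
  then have "set (removeAll x (fv M)) \<subseteq> set (map fst \<Gamma>)"
    using w unfolding fv_usubst_var by auto
  then show ?case using ty_abs.IH by auto
qed auto

lemma weaken: "TY \<Gamma> M B \<Longrightarrow> set \<Gamma> \<subseteq> set \<Delta> \<Longrightarrow> OK \<Delta> \<Longrightarrow> TY \<Delta> M B"
proof (induction arbitrary: \<Delta> rule: ctx_ok_typing.inducts(2)[where ?P1.0 = "\<lambda>_. True"])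
  case (ty_sort \<Gamma> s1 s2)
  then show ?case by (auto intro: ctx_ok_typing.ty_sort)
next
  case (ty_var \<Gamma> x A)
  then show ?case by (auto intro: ctx_ok_typing.ty_var)
next
  case (ty_prod s1 s2 s3 \<Gamma> A B x)
  have A: "TY \<Delta> A (Const s1)" using ty_prod by blast
  show ?case
  proof (rule ctx_ok_typing.ty_prod[OF ty_prod.hyps(1) A], intro allI impI)
    fix y assume y: "y \<notin> set (map fst \<Delta>)"
    then have "y \<notin> set (map fst \<Gamma>)" using ty_prod.prems(1) by auto
    moreover have "OK ((y, A) # \<Delta>)" using ctx_ok_typing.ok_cons[OF ty_prod.prems(2) A y] .
    moreover have "set ((y, A) # \<Gamma>) \<subseteq> set ((y, A) # \<Delta>)" using ty_prod.prems(1) by auto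
    ultimately show "TY ((y, A) # \<Delta>) (usubst enc dec chi B x (Var y)) (Const s2)"
      using ty_prod.IH(2) by blast
  qed
next
  case (ty_abs s1 s2 s3 \<Gamma> A B y M x)
  have A: "TY \<Delta> A (Const s1)" using ty_abs by blast
  show ?case
  proof (rule ctx_ok_typing.ty_abs[OF ty_abs.hyps(1) A]; intro allI impI)
    fix z assume z: "z \<notin> set (map fst \<Delta>)"
    then have "z \<notin> set (map fst \<Gamma>)" using ty_abs.prems(1) by auto
    moreover have "OK ((z, A) # \<Delta>)" using ctx_ok_typing.ok_cons[OF ty_abs.prems(2) A z] .
    moreover have "set ((z, A) # \<Gamma>) \<subseteq> set ((z, A) # \<Delta>)" using ty_abs.prems(1) by auto
    ultimately show "TY ((z, A) # \<Delta>) (usubst enc dec chi B y (Var z)) (Const s2)"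
      and "TY ((z, A) # \<Delta>) (usubst enc dec chi M x (Var z)) (usubst enc dec chi B y (Var z))"
      using ty_abs.IH(2,3) by blast+
  qed
next
  case (ty_app \<Gamma> M x A B N s)
  then show ?case by (blast intro: ctx_ok_typing.ty_app)
next
  case (ty_conv \<Gamma> M A B s)
  then show ?case by (blast intro: ctx_ok_typing.ty_conv)
qed auto


definition sok :: "('v, 'c) ctx \<Rightarrow> ('v \<Rightarrow> ('v, 'c) trm) \<Rightarrow> ('v, 'c) ctx \<Rightarrow> bool" where
  "sok \<Gamma>' \<sigma> \<Gamma> \<longleftrightarrow> (\<forall>u C. (u, C) \<in> set \<Gamma> \<longrightarrow> (\<forall>P. nrm P = nrm (\<sigma> u) \<longrightarrow> TY \<Gamma>' P (S C \<sigma>)))"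

definition SUBP :: "('v, 'c) ctx \<Rightarrow> ('v, 'c) trm \<Rightarrow> ('v, 'c) trm \<Rightarrow> bool" where
  "SUBP \<Gamma> M B \<longleftrightarrow> (\<forall>\<Gamma>' \<sigma> P. OK \<Gamma>' \<longrightarrow> sok \<Gamma>' \<sigma> \<Gamma> \<longrightarrow> nrm P = nrm (S M \<sigma>) \<longrightarrow> TY \<Gamma>' P (S B \<sigma>))"

lemma SUBP_D: "SUBP \<Gamma> M B \<Longrightarrow> OK \<Gamma>' \<Longrightarrow> sok \<Gamma>' \<sigma> \<Gamma> \<Longrightarrow> nrm P = nrm (S M \<sigma>) \<Longrightarrow> TY \<Gamma>' P (S B \<sigma>)"
  unfolding SUBP_def by blast

lemma sok_weaken: "sok \<Gamma>' \<sigma> \<Gamma> \<Longrightarrow> set \<Gamma>' \<subseteq> set \<Gamma>'' \<Longrightarrow> OK \<Gamma>'' \<Longrightarrow> sok \<Gamma>'' \<sigma> \<Gamma>"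
  unfolding sok_def using weaken by blast

lemma nrm_Var_inv: "nrm P = Var z \<Longrightarrow> P = Var z"
  by (cases P) (auto simp: Let_def)

lemma nrm_Const_inv: "nrm P = Const k \<Longrightarrow> P = Const k"
  by (cases P) (auto simp: Let_def)

lemma nrm_App_inv: "nrm P = App a b \<Longrightarrow> \<exists>P1 P2. P = App P1 P2 \<and> nrm P1 = a \<and> nrm P2 = b"
  by (cases P) (auto simp: Let_def)

lemma nrm_Pi_inv:
  assumes "nrm P = nrm (Pi y T B)"
  shows "\<exists>y' T' B'. P = Pi y' T' B' \<and> nrm T' = nrm T \<and>
           (\<forall>z. usubst enc dec chi B' y' (Var z) = usubst enc dec chi B y (Var z))"
proof (cases P)
  case (Pi y' T' B')
  define w where "w = Xfresh' enc dec chi (removeAll y' (fv B'))"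
  define w2 where "w2 = Xfresh' enc dec chi (removeAll y (fv B))"
  have "Pi w (nrm T') (S B' (Var(y' := Var w))) = Pi w2 (nrm T) (S B (Var(y := Var w2)))"
    using assms unfolding Pi w_def w2_def by (simp only: sact.simps Let_def Xfresh_Var)
  then have ww: "w = w2" and TT: "nrm T' = nrm T" and BB0: "S B' (Var(y' := Var w)) = S B (Var(y := Var w2))"
    unfolding trm.inject by blast+
  have BB: "S B' (Var(y' := Var w)) = S B (Var(y := Var w))" using BB0 ww by simp
  have f1: "w \<notin> set (removeAll y' (fv B'))" unfolding w_def by (rule Xfresh'_notin)
  have f2: "w \<notin> set (removeAll y (fv B))" unfolding ww w2_def by (rule Xfresh'_notin)
  have "\<forall>z. usubst enc dec chi B' y' (Var z) = usubst enc dec chi B y (Var z)"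
  proof
    fix z
    have "S (usubst enc dec chi B' y' (Var w)) (Var(w := Var z)) = S (usubst enc dec chi B y (Var w)) (Var(w := Var z))"
      using BB by (simp add: usubst_def)
    then show "usubst enc dec chi B' y' (Var z) = usubst enc dec chi B y (Var z)"
      unfolding rename_body[OF f1] rename_body[OF f2] by (simp add: usubst_def)
  qed
  then show ?thesis using Pi TT by blast
qed (use assms in \<open>auto simp: Let_def\<close>)

lemma nrm_Lam_inv:
  assumes "nrm P = nrm (Lam y T B)"
  shows "\<exists>y' T' B'. P = Lam y' T' B' \<and> nrm T' = nrm T \<and>
           (\<forall>z. usubst enc dec chi B' y' (Var z) = usubst enc dec chi B y (Var z))"
proof (cases P)
  case (Lam y' T' B')
  define w where "w = Xfresh' enc dec chi (removeAll y' (fv B'))"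
  define w2 where "w2 = Xfresh' enc dec chi (removeAll y (fv B))"
  have "Lam w (nrm T') (S B' (Var(y' := Var w))) = Lam w2 (nrm T) (S B (Var(y := Var w2)))"
    using assms unfolding Lam w_def w2_def by (simp only: sact.simps Let_def Xfresh_Var)
  then have ww: "w = w2" and TT: "nrm T' = nrm T" and BB0: "S B' (Var(y' := Var w)) = S B (Var(y := Var w2))"
    unfolding trm.inject by blast+
  have BB: "S B' (Var(y' := Var w)) = S B (Var(y := Var w))" using BB0 ww by simp
  have f1: "w \<notin> set (removeAll y' (fv B'))" unfolding w_def by (rule Xfresh'_notin)
  have f2: "w \<notin> set (removeAll y (fv B))" unfolding ww w2_def by (rule Xfresh'_notin)
  have "\<forall>z. usubst enc dec chi B' y' (Var z) = usubst enc dec chi B y (Var z)"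
  proof
    fix z
    have "S (usubst enc dec chi B' y' (Var w)) (Var(w := Var z)) = S (usubst enc dec chi B y (Var w)) (Var(w := Var z))"
      using BB by (simp add: usubst_def)
    then show "usubst enc dec chi B' y' (Var z) = usubst enc dec chi B y (Var z)"
      unfolding rename_body[OF f1] rename_body[OF f2] by (simp add: usubst_def)
  qed
  then show ?thesis using Lam TT by blast
qed (use assms in \<open>auto simp: Let_def\<close>)


lemma nrm_Var_upd: "(\<lambda>v. nrm ((Var(a := Var b)) v)) = Var(a := Var b)"
  by (rule ext) simp

lemma nrm_fun_upd: "(\<lambda>v. nrm ((\<sigma>(a := Q)) v)) = (\<lambda>v. nrm (\<sigma> v))(a := nrm Q)"
  by (rule ext) simp

lemma sact_fresh_upd: "y \<notin> set (fv M) \<Longrightarrow> S M (\<sigma>(y := P)) = S M \<sigma>"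
  by (rule sact_cong) auto

lemma body_nrm:
  assumes k1: "k1 = XF \<sigma> (removeAll k (fv K))" and w: "w \<notin> set (fv K)"
  shows "nrm (usubst enc dec chi (S K (\<sigma>(k := Var k1))) k1 (Var z)) =
         nrm (S (usubst enc dec chi K k (Var w)) (\<sigma>(w := Var z)))"
proof -
  have yf: "\<forall>u\<in>set (removeAll k (fv K)). k1 \<notin> set (fv (\<sigma> u))" unfolding k1 by (rule XF_fresh)
  have L: "nrm (usubst enc dec chi (S K (\<sigma>(k := Var k1))) k1 (Var z)) = S K ((\<lambda>u. nrm (\<sigma> u))(k := Var z))"
    unfolding usubst_def nrm_sact sact_comp nrm_Var_upd
  proof (rule sact_cong, intro ballI, goal_cases)
    case (1 u) then show ?case
    proof (cases "u = k")
      case False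
      then have "k1 \<notin> set (fv (\<sigma> u))" using yf 1 by auto
      then show ?thesis using False by (simp add: sact_fresh_upd)
    qed simp
  qed
  have R: "nrm (S (usubst enc dec chi K k (Var w)) (\<sigma>(w := Var z))) = S K ((\<lambda>u. nrm (\<sigma> u))(k := Var z))"
    unfolding usubst_def nrm_sact sact_comp nrm_fun_upd
  proof (rule sact_cong, intro ballI, goal_cases)
    case (1 u) then show ?case using w by (cases "u = k") auto
  qed
  show ?thesis using L R by simp
qed

lemma app_nrm:
  assumes y1: "y1 = XF \<sigma> (removeAll y (fv B))" and P2: "nrm P2 = nrm (S M2 \<sigma>)"
  shows "nrm (usubst enc dec chi (S B (\<sigma>(y := Var y1))) y1 P2) = nrm (S (usubst enc dec chi B y M2) \<sigma>)"
proof -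
  have yf: "\<forall>u\<in>set (removeAll y (fv B)). y1 \<notin> set (fv (\<sigma> u))" unfolding y1 by (rule XF_fresh)
  have L: "nrm (usubst enc dec chi (S B (\<sigma>(y := Var y1))) y1 P2) = S B ((\<lambda>u. nrm (\<sigma> u))(y := nrm P2))"
    unfolding usubst_def nrm_sact sact_comp nrm_fun_upd
  proof (rule sact_cong, intro ballI, goal_cases)
    case (1 u) then show ?case
    proof (cases "u = y")
      case False
      then have "y1 \<notin> set (fv (\<sigma> u))" using yf 1 by auto
      then show ?thesis using False by (simp add: sact_fresh_upd)
    qed simp
  qed
  have R: "nrm (S (usubst enc dec chi B y M2) \<sigma>) = S B ((\<lambda>u. nrm (\<sigma> u))(y := nrm P2))"
    unfolding usubst_def nrm_sact sact_comp
  proof (rule sact_cong, intro ballI, goal_cases)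
    case (1 u) then show ?case using P2 by (cases "u = y") (auto simp: nrm_sact)
  qed
  show ?thesis using L R by simp
qed

lemma binder_premise:
  assumes okG': "OK \<Gamma>'" and so: "sok \<Gamma>' \<sigma> \<Gamma>"
    and TT': "nrm T' = nrm (S T \<sigma>)" and tyT': "TY \<Gamma>' T' (Const s1)"
    and IHT: "SUBP \<Gamma> T (Const s1)"
    and z: "z \<notin> set (map fst \<Gamma>')"
    and w: "w \<notin> set (map fst \<Gamma>)" "w \<notin> set (fv T)" "\<forall>p\<in>set \<Gamma>. w \<notin> set (fv (snd p))"
  shows "OK ((z, T') # \<Gamma>')" and "sok ((z, T') # \<Gamma>') (\<sigma>(w := Var z)) ((w, T) # \<Gamma>)"
proof -
  show ok2: "OK ((z, T') # \<Gamma>')" by (rule ctx_ok_typing.ok_cons[OF okG' tyT' z])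
  have sub: "set \<Gamma>' \<subseteq> set ((z, T') # \<Gamma>')" by auto
  have so2: "sok ((z, T') # \<Gamma>') \<sigma> \<Gamma>" by (rule sok_weaken[OF so sub ok2])
  have eqT: "S T (\<sigma>(w := Var z)) = S T \<sigma>" using w(2) by (rule sact_fresh_upd)
  have tyST: "TY ((z, T') # \<Gamma>') (S T \<sigma>) (Const s1)"
    using SUBP_D[OF IHT ok2 so2, of "S T \<sigma>"] by simp
  show "sok ((z, T') # \<Gamma>') (\<sigma>(w := Var z)) ((w, T) # \<Gamma>)"
    unfolding sok_def
  proof (intro allI impI)
    fix u C P assume uC: "(u, C) \<in> set ((w, T) # \<Gamma>)" and P: "nrm P = nrm ((\<sigma>(w := Var z)) u)"
    show "TY ((z, T') # \<Gamma>') P (S C (\<sigma>(w := Var z)))"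
    proof (cases "(u, C) = (w, T)")
      case True
      then have Pz: "P = Var z" using P nrm_Var_inv by auto
      have "TY ((z, T') # \<Gamma>') (Var z) T'" by (rule ctx_ok_typing.ty_var[OF ok2]) simp
      then have "TY ((z, T') # \<Gamma>') (Var z) (S T \<sigma>)"
        by (rule ctx_ok_typing.ty_conv[OF _ nrm_bc[OF TT'] tyST])
      then show ?thesis using True Pz eqT by simp
    next
      case False
      then have uC': "(u, C) \<in> set \<Gamma>" using uC by auto
      then have uw: "u \<noteq> w" using w(1) by force
      have "w \<notin> set (fv C)" using w(3) uC' by force
      then have eqC: "S C (\<sigma>(w := Var z)) = S C \<sigma>" by (rule sact_fresh_upd)
      have "TY ((z, T') # \<Gamma>') P (S C \<sigma>)" using so2 uC' P uw unfolding sok_def by auto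
      then show ?thesis using eqC by simp
    qed
  qed
qed

lemma binder_IH:
  assumes IH: "\<forall>w. w \<notin> set (map fst \<Gamma>) \<longrightarrow> TY ((w, T) # \<Gamma>) (usubst enc dec chi K k (Var w)) (Cw w) \<and>
                 SUBP ((w, T) # \<Gamma>) (usubst enc dec chi K k (Var w)) (Cw w)"
    and okG': "OK \<Gamma>'" and so: "sok \<Gamma>' \<sigma> \<Gamma>"
    and TT': "nrm T' = nrm (S T \<sigma>)" and tyT': "TY \<Gamma>' T' (Const s1)"
    and IHT: "SUBP \<Gamma> T (Const s1)"
    and z: "z \<notin> set (map fst \<Gamma>')"
  shows "\<exists>w. w \<notin> set ws \<and> TY ((z, T') # \<Gamma>')
           (usubst enc dec chi (S K (\<sigma>(k := Var (XF \<sigma> (removeAll k (fv K)))))) (XF \<sigma> (removeAll k (fv K))) (Var z))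
           (S (Cw w) (\<sigma>(w := Var z)))"
proof -
  obtain w where w: "w \<notin> set (ws @ map fst \<Gamma> @ fv T @ fv K @ concat (map (\<lambda>p. fv (snd p)) \<Gamma>))"
    using exists_fresh by blast
  have w1: "w \<notin> set (map fst \<Gamma>)" "w \<notin> set (fv T)" "\<forall>p\<in>set \<Gamma>. w \<notin> set (fv (snd p))"
    using w by auto
  have wK: "w \<notin> set (fv K)" using w by auto
  note bp = binder_premise[OF okG' so TT' tyT' IHT z w1]
  have sub: "SUBP ((w, T) # \<Gamma>) (usubst enc dec chi K k (Var w)) (Cw w)" using IH w1(1) by blast
  have "TY ((z, T') # \<Gamma>')
           (usubst enc dec chi (S K (\<sigma>(k := Var (XF \<sigma> (removeAll k (fv K)))))) (XF \<sigma> (removeAll k (fv K))) (Var z))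
           (S (Cw w) (\<sigma>(w := Var z)))"
    by (rule SUBP_D[OF sub bp]) (rule body_nrm[OF refl wK])
  then show ?thesis using w by auto
qed

lemma prod_case:
  assumes Rl: "Rl s1 s2 s3" and IHT: "SUBP \<Gamma> T (Const s1)"
    and IHB: "\<forall>w. w \<notin> set (map fst \<Gamma>) \<longrightarrow> TY ((w, T) # \<Gamma>) (usubst enc dec chi B y (Var w)) (Const s2) \<and>
                 SUBP ((w, T) # \<Gamma>) (usubst enc dec chi B y (Var w)) (Const s2)"
    and okG': "OK \<Gamma>'" and so: "sok \<Gamma>' \<sigma> \<Gamma>" and P: "nrm P = nrm (S (Pi y T B) \<sigma>)"
  shows "TY \<Gamma>' P (Const s3)"
proof -
  define y1 where "y1 = XF \<sigma> (removeAll y (fv B))"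
  have e: "S (Pi y T B) \<sigma> = Pi y1 (S T \<sigma>) (S B (\<sigma>(y := Var y1)))" unfolding y1_def by (rule sact_pi)
  obtain y' T' B' where PP: "P = Pi y' T' B'" and TT': "nrm T' = nrm (S T \<sigma>)"
     and BB: "\<forall>z. usubst enc dec chi B' y' (Var z) = usubst enc dec chi (S B (\<sigma>(y := Var y1))) y1 (Var z)"
    using nrm_Pi_inv[OF P[unfolded e]] by blast
  have tyT': "TY \<Gamma>' T' (Const s1)" using SUBP_D[OF IHT okG' so TT'] by simp
  show ?thesis unfolding PP
  proof (rule ctx_ok_typing.ty_prod[OF Rl tyT'], intro allI impI)
    fix z assume z: "z \<notin> set (map fst \<Gamma>')"
    obtain w where "TY ((z, T') # \<Gamma>') (usubst enc dec chi (S B (\<sigma>(y := Var y1))) y1 (Var z)) (S (Const s2) (\<sigma>(w := Var z)))"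
      using binder_IH[OF IHB okG' so TT' tyT' IHT z, of "[]"] unfolding y1_def by blast
    then show "TY ((z, T') # \<Gamma>') (usubst enc dec chi B' y' (Var z)) (Const s2)" using BB by simp
  qed
qed


lemma main: "TY \<Gamma> M B \<Longrightarrow> SUBP \<Gamma> M B"
proof (induction rule: ctx_ok_typing.inducts(2)[where ?P1.0 = "\<lambda>_. True"])
  case (ty_sort \<Gamma> s1 s2)
  show ?case unfolding SUBP_def
  proof (intro allI impI)
    fix \<Gamma>' \<sigma> P assume ok: "OK \<Gamma>'" and "sok \<Gamma>' \<sigma> \<Gamma>" and P: "nrm P = nrm (S (Const s1) \<sigma>)"
    then have "P = Const s1" using nrm_Const_inv by simp
    then show "TY \<Gamma>' P (S (Const s2) \<sigma>)" using ctx_ok_typing.ty_sort[OF ok \<open>Ax s1 s2\<close>] by simp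
  qed
next
  case (ty_var \<Gamma> x A)
  then show ?case unfolding SUBP_def sok_def by simp
next
  case (ty_prod s1 s2 s3 \<Gamma> A B x)
  have IHT: "SUBP \<Gamma> A (Const s1)" using ty_prod by blast
  have IHB: "\<forall>w. w \<notin> set (map fst \<Gamma>) \<longrightarrow> TY ((w, A) # \<Gamma>) (usubst enc dec chi B x (Var w)) (Const s2) \<and>
                 SUBP ((w, A) # \<Gamma>) (usubst enc dec chi B x (Var w)) (Const s2)" using ty_prod by blast
  show ?case unfolding SUBP_def
  proof (intro allI impI)
    fix \<Gamma>' \<sigma> P assume ok: "OK \<Gamma>'" and so: "sok \<Gamma>' \<sigma> \<Gamma>" and P: "nrm P = nrm (S (Pi x A B) \<sigma>)"
    show "TY \<Gamma>' P (S (Const s3) \<sigma>)" using prod_case[OF ty_prod.hyps(1) IHT IHB ok so P] by simp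
  qed
next
  case (ty_abs s1 s2 s3 \<Gamma> A B y M x)
  have IHT: "SUBP \<Gamma> A (Const s1)" using ty_abs by blast
  have IHB: "\<forall>w. w \<notin> set (map fst \<Gamma>) \<longrightarrow> TY ((w, A) # \<Gamma>) (usubst enc dec chi B y (Var w)) (Const s2) \<and>
                 SUBP ((w, A) # \<Gamma>) (usubst enc dec chi B y (Var w)) (Const s2)" using ty_abs by blast
  have IHM: "\<forall>w. w \<notin> set (map fst \<Gamma>) \<longrightarrow> TY ((w, A) # \<Gamma>) (usubst enc dec chi M x (Var w)) (usubst enc dec chi B y (Var w)) \<and>
                 SUBP ((w, A) # \<Gamma>) (usubst enc dec chi M x (Var w)) (usubst enc dec chi B y (Var w))" using ty_abs by blast
  show ?case unfolding SUBP_def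
  proof (intro allI impI)
    fix \<Gamma>' \<sigma> P assume ok: "OK \<Gamma>'" and so: "sok \<Gamma>' \<sigma> \<Gamma>" and P: "nrm P = nrm (S (Lam x A M) \<sigma>)"
    define x1 where "x1 = XF \<sigma> (removeAll x (fv M))"
    define y1 where "y1 = XF \<sigma> (removeAll y (fv B))"
    define B1 where "B1 = S B (\<sigma>(y := Var y1))"
    have eL: "S (Lam x A M) \<sigma> = Lam x1 (S A \<sigma>) (S M (\<sigma>(x := Var x1)))" unfolding x1_def by (rule sact_lam)
    have eP: "S (Pi y A B) \<sigma> = Pi y1 (S A \<sigma>) B1" unfolding y1_def B1_def by (rule sact_pi)
    obtain x' T' M' where PP: "P = Lam x' T' M'" and TT': "nrm T' = nrm (S A \<sigma>)"
       and MM: "\<forall>z. usubst enc dec chi M' x' (Var z) = usubst enc dec chi (S M (\<sigma>(x := Var x1))) x1 (Var z)"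
      using nrm_Lam_inv[OF P[unfolded eL]] by blast
    have tyT': "TY \<Gamma>' T' (Const s1)" using SUBP_D[OF IHT ok so TT'] by simp
    have tyB: "\<forall>z. z \<notin> set (map fst \<Gamma>') \<longrightarrow> TY ((z, T') # \<Gamma>') (usubst enc dec chi B1 y1 (Var z)) (Const s2)"
    proof (intro allI impI)
      fix z assume z: "z \<notin> set (map fst \<Gamma>')"
      obtain w where "TY ((z, T') # \<Gamma>') (usubst enc dec chi B1 y1 (Var z)) (S (Const s2) (\<sigma>(w := Var z)))"
        using binder_IH[OF IHB ok so TT' tyT' IHT z, of "[]"] unfolding y1_def B1_def by blast
      then show "TY ((z, T') # \<Gamma>') (usubst enc dec chi B1 y1 (Var z)) (Const s2)" by simp
    qed
    have tyLam: "TY \<Gamma>' (Lam x' T' M') (Pi y1 T' B1)"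
    proof (rule ctx_ok_typing.ty_abs[OF ty_abs.hyps(1) tyT' tyB], intro allI impI)
      fix z assume z: "z \<notin> set (map fst \<Gamma>')"
      obtain w where w: "w \<notin> set (fv B)" and
        ty: "TY ((z, T') # \<Gamma>') (usubst enc dec chi (S M (\<sigma>(x := Var x1))) x1 (Var z))
               (S (usubst enc dec chi B y (Var w)) (\<sigma>(w := Var z)))"
        using binder_IH[OF IHM ok so TT' tyT' IHT z, of "fv B"] unfolding x1_def by blast
      have "nrm (usubst enc dec chi B1 y1 (Var z)) = nrm (S (usubst enc dec chi B y (Var w)) (\<sigma>(w := Var z)))"
        unfolding B1_def by (rule body_nrm[OF y1_def w])
      then have bcB: "bc (S (usubst enc dec chi B y (Var w)) (\<sigma>(w := Var z))) (usubst enc dec chi B1 y1 (Var z))"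
        by (intro nrm_bc) simp
      have "TY ((z, T') # \<Gamma>') (usubst enc dec chi (S M (\<sigma>(x := Var x1))) x1 (Var z)) (usubst enc dec chi B1 y1 (Var z))"
        by (rule ctx_ok_typing.ty_conv[OF ty bcB]) (use tyB z in blast)
      then show "TY ((z, T') # \<Gamma>') (usubst enc dec chi M' x' (Var z)) (usubst enc dec chi B1 y1 (Var z))"
        using MM by simp
    qed
    have tyPi: "TY \<Gamma>' (Pi y1 (S A \<sigma>) B1) (Const s3)"
      by (rule prod_case[OF ty_abs.hyps(1) IHT IHB ok so]) (simp only: eP)
    have bcPi: "bc (Pi y1 T' B1) (Pi y1 (S A \<sigma>) B1)"
      by (rule nrm_bc) (simp add: Let_def TT')
    show "TY \<Gamma>' P (S (Pi y A B) \<sigma>)" unfolding eP PP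
      by (rule ctx_ok_typing.ty_conv[OF tyLam bcPi tyPi])
  qed
next
  case (ty_app \<Gamma> M x A B N s)
  have IH1: "SUBP \<Gamma> M (Pi x A B)" and IH2: "SUBP \<Gamma> N A" and IH3: "SUBP \<Gamma> (usubst enc dec chi B x N) (Const s)"
    using ty_app by blast+
  show ?case unfolding SUBP_def
  proof (intro allI impI)
    fix \<Gamma>' \<sigma> P assume ok: "OK \<Gamma>'" and so: "sok \<Gamma>' \<sigma> \<Gamma>" and P: "nrm P = nrm (S (App M N) \<sigma>)"
    obtain P1 P2 where PP: "P = App P1 P2" and P1: "nrm P1 = nrm (S M \<sigma>)" and P2: "nrm P2 = nrm (S N \<sigma>)"
      using nrm_App_inv[of P "nrm (S M \<sigma>)" "nrm (S N \<sigma>)"] P by auto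
    define x1 where "x1 = XF \<sigma> (removeAll x (fv B))"
    have eP: "S (Pi x A B) \<sigma> = Pi x1 (S A \<sigma>) (S B (\<sigma>(x := Var x1)))" unfolding x1_def by (rule sact_pi)
    have ty1: "TY \<Gamma>' P1 (Pi x1 (S A \<sigma>) (S B (\<sigma>(x := Var x1))))" using SUBP_D[OF IH1 ok so P1] eP by simp
    have ty2: "TY \<Gamma>' P2 (S A \<sigma>)" using SUBP_D[OF IH2 ok so P2] .
    have ne: "nrm (usubst enc dec chi (S B (\<sigma>(x := Var x1))) x1 P2) = nrm (S (usubst enc dec chi B x N) \<sigma>)"
      by (rule app_nrm[OF x1_def P2])
    have ty3: "TY \<Gamma>' (usubst enc dec chi (S B (\<sigma>(x := Var x1))) x1 P2) (Const s)"
      using SUBP_D[OF IH3 ok so ne] by simp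
    have ty3': "TY \<Gamma>' (S (usubst enc dec chi B x N) \<sigma>) (Const s)"
      using SUBP_D[OF IH3 ok so refl] by simp
    have "TY \<Gamma>' (App P1 P2) (usubst enc dec chi (S B (\<sigma>(x := Var x1))) x1 P2)"
      by (rule ctx_ok_typing.ty_app[OF ty1 ty2 ty3])
    then show "TY \<Gamma>' P (S (usubst enc dec chi B x N) \<sigma>)" unfolding PP
      by (rule ctx_ok_typing.ty_conv[OF _ nrm_bc[OF ne] ty3'])
  qed
next
  case (ty_conv \<Gamma> M A B s)
  have IH1: "SUBP \<Gamma> M A" and IH2: "SUBP \<Gamma> B (Const s)" and bcAB: "bc A B"
    using ty_conv by blast+
  show ?case unfolding SUBP_def
  proof (intro allI impI)
    fix \<Gamma>' \<sigma> P assume ok: "OK \<Gamma>'" and so: "sok \<Gamma>' \<sigma> \<Gamma>" and P: "nrm P = nrm (S M \<sigma>)"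
    have t1: "TY \<Gamma>' P (S A \<sigma>)" by (rule SUBP_D[OF IH1 ok so P])
    have t2: "TY \<Gamma>' (S B \<sigma>) (Const s)" using SUBP_D[OF IH2 ok so refl] by simp
    show "TY \<Gamma>' P (S B \<sigma>)" by (rule ctx_ok_typing.ty_conv[OF t1 bc_sact[OF bcAB] t2])
  qed
qed auto


lemma ctx_refl: "OK \<Gamma> \<Longrightarrow> sok \<Gamma> Var \<Gamma>"
proof (induction \<Gamma>)
  case Nil
  show ?case unfolding sok_def by simp
next
  case (Cons p \<Gamma>0)
  obtain v D where p: "p = (v, D)" by (cases p)
  from Cons.prems[unfolded p] obtain s where ok0: "OK \<Gamma>0" and tyD: "TY \<Gamma>0 D (Const s)"
    by (cases rule: ctx_ok.cases) auto
  have so0: "sok \<Gamma>0 Var \<Gamma>0" using Cons.IH ok0 by blast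
  have okG: "OK ((v, D) # \<Gamma>0)" using Cons.prems p by simp
  have sub: "set \<Gamma>0 \<subseteq> set ((v, D) # \<Gamma>0)" by auto
  have tn: "TY \<Gamma>0 (nrm D) (Const s)" using SUBP_D[OF main[OF tyD] ok0 so0, of "nrm D"] by (simp add: nrm_nrm)
  have tn': "TY ((v, D) # \<Gamma>0) (nrm D) (Const s)" by (rule weaken[OF tn sub okG])
  show ?case unfolding p sok_def
  proof (intro allI impI)
    fix u C and P :: "('v, 'c) trm"
    assume uC: "(u, C) \<in> set ((v, D) # \<Gamma>0)" and P: "nrm P = nrm (Var u)"
    then have Pu: "P = Var u" using nrm_Var_inv by simp
    show "TY ((v, D) # \<Gamma>0) P (S C Var)"
    proof (cases "(u, C) = (v, D)")
      case True
      have "TY ((v, D) # \<Gamma>0) (Var v) D" by (rule ctx_ok_typing.ty_var[OF okG]) simp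
      then have "TY ((v, D) # \<Gamma>0) (Var v) (nrm D)"
        by (rule ctx_ok_typing.ty_conv[OF _ nrm_bc tn']) (simp add: nrm_nrm)
      then show ?thesis using True Pu by simp
    next
      case False
      then have "(u, C) \<in> set \<Gamma>0" using uC by auto
      then have "TY \<Gamma>0 P (S C Var)" using so0 P unfolding sok_def by blast
      then show ?thesis by (rule weaken[OF _ sub okG])
    qed
  qed
qed

lemma final:
  assumes hM: "TY ((x, A) # \<Gamma>) M B" and hN: "TY \<Gamma> N A"
  shows "TY \<Gamma> (usubst enc dec chi M x N) (usubst enc dec chi B x N)"
proof -
  have okx: "OK ((x, A) # \<Gamma>)" by (rule typing_ok[OF hM])
  then obtain s where ok: "OK \<Gamma>" and tyA: "TY \<Gamma> A (Const s)" and x: "x \<notin> set (map fst \<Gamma>)"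
    by (cases rule: ctx_ok.cases) auto
  have so0: "sok \<Gamma> Var \<Gamma>" by (rule ctx_refl[OF ok])
  have fvA: "set (fv A) \<subseteq> set (map fst \<Gamma>)" by (rule fv_ok_typing(2)[OF tyA])
  have fvG: "\<forall>p\<in>set \<Gamma>. set (fv (snd p)) \<subseteq> set (map fst \<Gamma>)" by (rule fv_ok_typing(1)[OF ok])
  define \<sigma> where "\<sigma> = Var(x := N)"
  have xA: "x \<notin> set (fv A)" using fvA x by auto
  have eqA: "S A \<sigma> = S A Var" unfolding \<sigma>_def using xA by (rule sact_fresh_upd)
  have so: "sok \<Gamma> \<sigma> ((x, A) # \<Gamma>)" unfolding sok_def
  proof (intro allI impI)
    fix u C P assume uC: "(u, C) \<in> set ((x, A) # \<Gamma>)" and P: "nrm P = nrm (\<sigma> u)"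
    show "TY \<Gamma> P (S C \<sigma>)"
    proof (cases "(u, C) = (x, A)")
      case True
      then have "nrm P = nrm (S N Var)" using P unfolding \<sigma>_def by (simp add: nrm_nrm)
      then have "TY \<Gamma> P (S A Var)" by (rule SUBP_D[OF main[OF hN] ok so0])
      then show ?thesis using True eqA by simp
    next
      case False
      then have uC': "(u, C) \<in> set \<Gamma>" using uC by auto
      then have ux: "u \<noteq> x" using x by force
      have "x \<notin> set (fv C)" using fvG uC' x by force
      then have eqC: "S C \<sigma> = S C Var" unfolding \<sigma>_def by (rule sact_fresh_upd)
      have "TY \<Gamma> P (S C Var)" using so0 uC' P ux unfolding sok_def \<sigma>_def by auto
      then show ?thesis using eqC by simp
    qed
  qed
  show ?thesis using SUBP_D[OF main[OF hM] ok so refl] unfolding usubst_def \<sigma>_def .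
qed

end

theorem mainTheorem17:
  fixes enc :: "'v \<Rightarrow> nat" and dec :: "nat \<Rightarrow> 'v" and chi :: "nat list \<Rightarrow> nat"
    and Ax :: "'c \<Rightarrow> 'c \<Rightarrow> bool" and Rl :: "'c \<Rightarrow> 'c \<Rightarrow> 'c \<Rightarrow> bool"
    and \<Gamma> :: "('v, 'c) ctx" and M N A B :: "('v, 'c) trm" and x :: 'v
  assumes enc_dec: "\<forall>n. enc (dec n) = n"
    and chi_fresh: "\<forall>ns. chi ns \<notin> set ns"
    and hM: "typing enc dec chi Ax Rl ((x, A) # \<Gamma>) M B"
    and hN: "typing enc dec chi Ax Rl \<Gamma> N A"
  shows "typing enc dec chi Ax Rl \<Gamma> (usubst enc dec chi M x N) (usubst enc dec chi B x N)"
proof -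
  interpret pts2 enc dec chi Ax Rl
    by unfold_locales (use enc_dec chi_fresh in auto)
  show ?thesis by (rule final[OF hM hN])
qed

end
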